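(* Let $\mathcal H$ be a complex Hilbert space, $U\in\mathcal B(\mathcal H)$ unitary, and $\mathcal K\subset\mathcal H$ a closed subspace with orthogonal projection $P_{\mathcal K}$. Put $S=(I-P_{\mathcal K})U$, let $\Theta_S$ be the characteristic function of $S$ (viewed as a map $U^*(\mathcal K)\to\mathcal K$, see context), and let $\tilde U:U^*(\mathcal K)\to\mathcal K$ be the restriction of $U$ to $U^*(\mathcal K)$. Then for every $z$ in the open unit disc $\mathbb D$ and every $k\in\mathcal K$, $$\big\langle (U+zI)(U-zI)^{-1}k,\,k\big\rangle=\big\langle (\tilde U+\Theta_S(z))(\tilde U-\Theta_S(z))^{-1}k,\,k\big\rangle .$$
   Context: For a contraction $T$ on a Hilbert space, $D_T=(I-T^*T)^{1/2}$, $D_{T^*}=(I-TT^* )^{1/2}$, $\mathcal D_T=\overline{D_T\mathcal H}$, $\mathcal D_{T^*}=\overline{D_{T^*}\mathcal H}$, and the characteristic function is $\Theta_T(z)=\big(-T+zD_{T^*}(I-zT^* )^{-1}D_T\big)|_{\mathcal D_T}:\mathcal D_T\to\mathcal D_{T^*}$, $z\in\mathbb D$. For $S=(I-P_{\mathcal K})U$ one has $\mathcal D_S=U^*(\mathcal K)$ and $\mathcal D_{S^*}=\mathcal K$, so $\Theta_S(z):U^*(\mathcal K)\to\mathcal K$, and $\Theta_S(0)=0$. The operator $(\tilde U+\Theta_S(z))(\tilde U-\Theta_S(z))^{-1}$ acts on $\mathcal K$. *)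

theory Defs
  imports "HOL-Analysis.Analysis"
begin

class scaleC =
  fixes scaleC :: "complex \<Rightarrow> 'a \<Rightarrow> 'a" (infixr "*\<^sub>C" 75)

class complex_vector = real_vector + scaleC +
  assumes scaleC_add_right: "a *\<^sub>C (x + y) = a *\<^sub>C x + a *\<^sub>C y"
    and scaleC_add_left: "(a + b) *\<^sub>C x = a *\<^sub>C x + b *\<^sub>C x"
    and scaleC_scaleC: "a *\<^sub>C (b *\<^sub>C x) = (a * b) *\<^sub>C x"
    and scaleC_one: "1 *\<^sub>C x = x"
    and scaleR_scaleC: "scaleR r x = complex_of_real r *\<^sub>C x"

class complex_inner = complex_vector + real_normed_vector +
  fixes cinner :: "'a \<Rightarrow> 'a \<Rightarrow> complex"
  assumes cinner_commute: "cinner x y = cnj (cinner y x)"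
    and cinner_add_left: "cinner (x + y) z = cinner x z + cinner y z"
    and cinner_scaleC_left: "cinner (a *\<^sub>C x) y = a * cinner x y"
    and cinner_self_real: "Im (cinner x x) = 0"
    and cinner_self_nonneg: "0 \<le> Re (cinner x x)"
    and cinner_self_eq_zero: "cinner x x = 0 \<longleftrightarrow> x = 0"
    and norm_eq_sqrt_cinner: "norm x = sqrt (Re (cinner x x))"

class chilbert_space = complex_inner + complete_space

definition clinear :: "('a::complex_vector \<Rightarrow> 'b::complex_vector) \<Rightarrow> bool" where
  "clinear f \<longleftrightarrow> (\<forall>x y. f (x + y) = f x + f y) \<and> (\<forall>c x. f (c *\<^sub>C x) = c *\<^sub>C f x)"

definition bounded_clinear :: "('a::complex_inner \<Rightarrow> 'b::complex_inner) \<Rightarrow> bool" where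
  "bounded_clinear f \<longleftrightarrow> clinear f \<and> (\<exists>K. \<forall>x. norm (f x) \<le> norm x * K)"

definition csubspace :: "'a::complex_vector set \<Rightarrow> bool" where
  "csubspace S \<longleftrightarrow> 0 \<in> S \<and> (\<forall>x\<in>S. \<forall>y\<in>S. x + y \<in> S) \<and> (\<forall>c. \<forall>x\<in>S. c *\<^sub>C x \<in> S)"

definition adj :: "('a::complex_inner \<Rightarrow> 'b::complex_inner) \<Rightarrow> 'b \<Rightarrow> 'a" where
  "adj T = (\<lambda>y. THE w. \<forall>x. cinner (T x) y = cinner x w)"

definition unitary :: "('a::chilbert_space \<Rightarrow> 'a) \<Rightarrow> bool" where
  "unitary U \<longleftrightarrow> bounded_clinear U \<and> U \<circ> adj U = id \<and> adj U \<circ> U = id"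

definition proj :: "'a::complex_inner set \<Rightarrow> 'a \<Rightarrow> 'a" where
  "proj K x = (THE y. y \<in> K \<and> (\<forall>k\<in>K. cinner (x - y) k = 0))"

definition positive_op :: "('a::complex_inner \<Rightarrow> 'a) \<Rightarrow> bool" where
  "positive_op A \<longleftrightarrow> bounded_clinear A \<and> (\<forall>x. Im (cinner (A x) x) = 0 \<and> 0 \<le> Re (cinner (A x) x))"

definition op_sqrt :: "('a::complex_inner \<Rightarrow> 'a) \<Rightarrow> 'a \<Rightarrow> 'a" where
  "op_sqrt A = (THE R. positive_op R \<and> R \<circ> R = A)"

definition inv_on :: "'a set \<Rightarrow> ('a \<Rightarrow> 'b) \<Rightarrow> 'b \<Rightarrow> 'a" where
  "inv_on A f y = (THE x. x \<in> A \<and> f x = y)"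

definition defect :: "('a::chilbert_space \<Rightarrow> 'a) \<Rightarrow> 'a \<Rightarrow> 'a" where
  "defect T = op_sqrt (\<lambda>x. x - adj T (T x))"

definition defect_space :: "('a::chilbert_space \<Rightarrow> 'a) \<Rightarrow> 'a set" where
  "defect_space T = closure (range (defect T))"

text \<open>Theta_T(z) = -T + z D_{T*} (I - z T*)^{-1} D_T, to be applied on the defect space D_T.\<close>
definition char_fun :: "('a::chilbert_space \<Rightarrow> 'a) \<Rightarrow> complex \<Rightarrow> 'a \<Rightarrow> 'a" where
  "char_fun T z x = - T x + z *\<^sub>C defect (adj T)
      (inv_on UNIV (\<lambda>y. y - z *\<^sub>C adj T y) (defect T x))"

end

theory Submission
  imports Defs
begin


context complex_vector begin
lemma scaleC_zero_left[simp]: "0 *\<^sub>C x = 0"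
proof -
  have "0 *\<^sub>C x + 0 *\<^sub>C x = 0 *\<^sub>C x + 0" using scaleC_add_left[of 0 0 x] by simp
  then show ?thesis by simp
qed
lemma scaleC_zero_right[simp]: "a *\<^sub>C 0 = 0"
proof -
  have "a *\<^sub>C 0 + a *\<^sub>C 0 = a *\<^sub>C 0 + 0" using scaleC_add_right[of a 0 0] by simp
  then show ?thesis by simp
qed
lemma scaleC_minus_left: "(- a) *\<^sub>C x = - (a *\<^sub>C x)"
proof -
  have "(- a) *\<^sub>C x + a *\<^sub>C x = 0" using scaleC_add_left[of "-a" a x] by simp
  then show ?thesis by (simp add: eq_neg_iff_add_eq_0)
qed
lemma scaleC_minus_right: "a *\<^sub>C (- x) = - (a *\<^sub>C x)"
proof -
  have "a *\<^sub>C (- x) + a *\<^sub>C x = 0" using scaleC_add_right[of a "-x" x] by simp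
  then show ?thesis by (simp add: eq_neg_iff_add_eq_0)
qed
lemma scaleC_diff_right: "a *\<^sub>C (x - y) = a *\<^sub>C x - a *\<^sub>C y"
  by (simp only: diff_conv_add_uminus scaleC_add_right scaleC_minus_right)
lemma scaleC_diff_left: "(a - b) *\<^sub>C x = a *\<^sub>C x - b *\<^sub>C x"
  using scaleC_add_left[of a "-b" x] by (simp add: scaleC_minus_left)
lemma minus_scaleC: "- x = (-1) *\<^sub>C x"
  by (simp add: scaleC_minus_left scaleC_one)
end

lemma clinear_zero: "clinear f \<Longrightarrow> f 0 = 0"
  unfolding clinear_def by (metis scaleC_zero_left)
lemma clinear_minus: "clinear f \<Longrightarrow> f (- x) = - f x"
  unfolding clinear_def by (metis minus_scaleC)
lemma clinear_add: "clinear f \<Longrightarrow> f (x + y) = f x + f y"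
  unfolding clinear_def by blast
lemma clinear_scale: "clinear f \<Longrightarrow> f (c *\<^sub>C x) = c *\<^sub>C f x"
  unfolding clinear_def by blast
lemma clinear_diff: "clinear f \<Longrightarrow> f (x - y) = f x - f y"
  by (simp only: diff_conv_add_uminus clinear_add clinear_minus)

context complex_inner begin
lemma cinner_add_right: "cinner x (y + z) = cinner x y + cinner x z"
  by (metis cinner_commute cinner_add_left complex_cnj_add)
lemma cinner_scaleC_right: "cinner x (a *\<^sub>C y) = cnj a * cinner x y"
  by (metis cinner_commute cinner_scaleC_left complex_cnj_mult)
lemma cinner_zero_left[simp]: "cinner 0 y = 0"
  using cinner_scaleC_left[of 0 0 y] by simp
lemma cinner_zero_right[simp]: "cinner x 0 = 0"
  using cinner_commute[of x 0] by simp
lemma cinner_minus_left: "cinner (- x) y = - cinner x y"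
  using cinner_scaleC_left[of "-1" x y] by (simp flip: minus_scaleC)
lemma cinner_minus_right: "cinner x (- y) = - cinner x y"
  using cinner_commute[of x "-y"] cinner_commute[of x y] cinner_minus_left[of y x] by simp
lemma cinner_diff_left: "cinner (x - y) z = cinner x z - cinner y z"
  using cinner_add_left[of x "-y" z] by (simp add: cinner_minus_left)
lemma cinner_diff_right: "cinner x (y - z) = cinner x y - cinner x z"
  using cinner_add_right[of x y "-z"] by (simp add: cinner_minus_right)
lemma cinner_self: "cinner x x = complex_of_real ((norm x)\<^sup>2)"
  using cinner_self_real[of x] cinner_self_nonneg[of x] norm_eq_sqrt_cinner[of x]
  by (simp add: complex_eq_iff)
lemma norm_sq_cinner: "(norm x)\<^sup>2 = Re (cinner x x)"
  by (simp add: cinner_self)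
end




lemma cinner_expand_diff:
  fixes x y :: "'a::complex_inner"
  shows "cinner (x - a *\<^sub>C y) (x - a *\<^sub>C y) =
    cinner x x - cnj a * cinner x y - a * cnj (cinner x y) + a * cnj a * cinner y y"
  by (simp add: cinner_diff_left cinner_diff_right cinner_scaleC_left cinner_scaleC_right
      cinner_commute[of y x] algebra_simps)

lemma cauchy_schwarz:
  fixes x y :: "'a::complex_inner"
  shows "cmod (cinner x y) \<le> norm x * norm y"
proof (cases "y = 0")
  case True then show ?thesis by simp
next
  case False
  define c where "c = cinner x y"
  define r where "r = (norm y)\<^sup>2"
  have r0: "r > 0" using False by (simp add: r_def)
  define t where "t = c / complex_of_real r"
  have yy: "cinner y y = complex_of_real r" by (simp add: r_def cinner_self)
  have "cinner (x - t *\<^sub>C y) (x - t *\<^sub>C y) = complex_of_real ((norm x)\<^sup>2) - c * cnj c / complex_of_real r"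
    unfolding cinner_expand_diff yy c_def[symmetric]
    using r0 by (simp add: t_def cinner_self field_simps power2_eq_square)
  also have "\<dots> = complex_of_real ((norm x)\<^sup>2 - (cmod c)\<^sup>2 / r)"
    by (simp flip: complex_norm_square)
  finally have "0 \<le> (norm x)\<^sup>2 - (cmod c)\<^sup>2 / r"
    using cinner_self_nonneg[of "x - t *\<^sub>C y"] by simp
  then have "(cmod c)\<^sup>2 \<le> (norm x * norm y)\<^sup>2"
    using r0 by (simp add: r_def field_simps power_mult_distrib)
  then show ?thesis unfolding c_def
    by (rule power2_le_imp_le) simp
qed

lemma cinner_left_lipschitz:
  fixes y :: "'a::complex_inner"
  shows "lipschitz_on (norm y) S (\<lambda>a. cinner a y)"
proof (rule lipschitz_onI)
  fix a b assume "a \<in> S" "b \<in> S"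
  have "dist (cinner a y) (cinner b y) = cmod (cinner (a - b) y)"
    by (simp add: dist_norm cinner_diff_left)
  also have "\<dots> \<le> norm (a - b) * norm y" by (rule cauchy_schwarz)
  finally show "dist (cinner a y) (cinner b y) \<le> norm y * dist a b"
    by (simp add: dist_norm mult.commute)
qed simp

lemma continuous_cinner_left: "continuous_on S (\<lambda>a. cinner a (y::'a::complex_inner))"
  by (rule lipschitz_on_continuous_on[OF cinner_left_lipschitz])

lemma bounded_clinear_lipschitz:
  assumes "bounded_clinear f"
  shows "\<exists>L. lipschitz_on L S f"
proof -
  from assms obtain K where K: "\<And>x. norm (f x) \<le> norm x * K" and l: "clinear f"
    unfolding bounded_clinear_def by blast
  have "lipschitz_on (max K 0) S f"
  proof (rule lipschitz_onI)
    fix a b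
    have "dist (f a) (f b) = norm (f (a - b))" by (simp add: dist_norm clinear_diff[OF l])
    also have "\<dots> \<le> norm (a - b) * K" by (rule K)
    also have "\<dots> \<le> max K 0 * dist a b"
      using mult_right_mono[of K "max K 0" "norm (a-b)"] by (simp add: dist_norm mult.commute)
    finally show "dist (f a) (f b) \<le> max K 0 * dist a b" .
  qed simp
  then show ?thesis by blast
qed

lemma bounded_clinear_continuous: "bounded_clinear f \<Longrightarrow> continuous_on S f"
  using bounded_clinear_lipschitz lipschitz_on_continuous_on by blast




lemma csub_0: "csubspace K \<Longrightarrow> 0 \<in> K" by (simp add: csubspace_def)
lemma csub_add: "csubspace K \<Longrightarrow> x \<in> K \<Longrightarrow> y \<in> K \<Longrightarrow> x + y \<in> K" by (simp add: csubspace_def)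
lemma csub_scale: "csubspace K \<Longrightarrow> x \<in> K \<Longrightarrow> c *\<^sub>C x \<in> K" by (simp add: csubspace_def)
lemma csub_minus: "csubspace K \<Longrightarrow> x \<in> K \<Longrightarrow> - x \<in> K"
  by (simp add: csub_scale minus_scaleC)
lemma csub_diff: "csubspace K \<Longrightarrow> x \<in> K \<Longrightarrow> y \<in> K \<Longrightarrow> x - y \<in> K"
  using csub_add[of K x "-y"] csub_minus[of K y] by simp
lemma csub_scaleR: "csubspace K \<Longrightarrow> x \<in> K \<Longrightarrow> r *\<^sub>R x \<in> K"
  by (simp add: csub_scale scaleR_scaleC)

lemma norm_step:
  fixes x y :: "'a::complex_inner"
  assumes "y \<noteq> 0"
  shows "(norm (x - (cinner x y / complex_of_real ((norm y)\<^sup>2)) *\<^sub>C y))\<^sup>2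
       = (norm x)\<^sup>2 - (cmod (cinner x y))\<^sup>2 / (norm y)\<^sup>2"
proof -
  define c where "c = cinner x y"
  define r where "r = (norm y)\<^sup>2"
  have r0: "r > 0" using assms by (simp add: r_def)
  define t where "t = c / complex_of_real r"
  have yy: "cinner y y = complex_of_real r" by (simp add: r_def cinner_self)
  have "cinner (x - t *\<^sub>C y) (x - t *\<^sub>C y) = complex_of_real ((norm x)\<^sup>2) - c * cnj c / complex_of_real r"
    unfolding cinner_expand_diff yy c_def[symmetric]
    using r0 by (simp add: t_def cinner_self field_simps power2_eq_square)
  also have "\<dots> = complex_of_real ((norm x)\<^sup>2 - (cmod c)\<^sup>2 / r)"
    by (simp flip: complex_norm_square)
  finally have eq: "cinner (x - t *\<^sub>C y) (x - t *\<^sub>C y) = complex_of_real ((norm x)\<^sup>2 - (cmod c)\<^sup>2 / r)" .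
  have "(norm (x - t *\<^sub>C y))\<^sup>2 = (norm x)\<^sup>2 - (cmod c)\<^sup>2 / r"
    by (simp only: norm_sq_cinner eq Re_complex_of_real)
  then show ?thesis by (simp only: t_def c_def r_def)
qed

lemma min_imp_orth:
  fixes x y :: "'a::complex_inner"
  assumes K: "csubspace K" and y: "y \<in> K" and m: "\<forall>k\<in>K. norm (x - y) \<le> norm (x - k)"
    and k: "k \<in> K"
  shows "cinner (x - y) k = 0"
proof (cases "k = 0")
  case True then show ?thesis by simp
next
  case False
  define t where "t = cinner (x - y) k / complex_of_real ((norm k)\<^sup>2)"
  have "y + t *\<^sub>C k \<in> K" using K y k by (simp add: csub_add csub_scale)
  then have "norm (x - y) \<le> norm (x - (y + t *\<^sub>C k))" using m by blast
  also have "x - (y + t *\<^sub>C k) = (x - y) - t *\<^sub>C k" by simp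
  finally have "(norm (x - y))\<^sup>2 \<le> (norm ((x - y) - t *\<^sub>C k))\<^sup>2"
    by (simp add: power_mono)
  also have "\<dots> = (norm (x - y))\<^sup>2 - (cmod (cinner (x - y) k))\<^sup>2 / (norm k)\<^sup>2"
    unfolding t_def by (rule norm_step[OF False])
  finally have "(cmod (cinner (x - y) k))\<^sup>2 / (norm k)\<^sup>2 \<le> 0" by simp
  then have "(cmod (cinner (x - y) k))\<^sup>2 \<le> 0" using False
    by (simp add: divide_le_0_iff)
  then show ?thesis by simp
qed

lemma parallelogram:
  fixes a b :: "'a::complex_inner"
  shows "(norm (a - b))\<^sup>2 + (norm (a + b))\<^sup>2 = 2 * (norm a)\<^sup>2 + 2 * (norm b)\<^sup>2"
  unfolding norm_sq_cinner
  by (simp add: cinner_add_left cinner_add_right cinner_diff_left cinner_diff_right)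

lemma min_exists:
  fixes x :: "'a::chilbert_space"
  assumes K: "csubspace K" and cl: "closed K"
  shows "\<exists>y\<in>K. \<forall>k\<in>K. norm (x - y) \<le> norm (x - k)"
proof -
  define d where "d = infdist x K"
  have Kne: "K \<noteq> {}" using csub_0[OF K] by blast
  have d0: "0 \<le> d" by (simp add: d_def infdist_nonneg)
  have dle: "d \<le> norm (x - k)" if "k \<in> K" for k
    using infdist_le[OF that, of x] by (simp add: d_def dist_norm)
  have "\<exists>a\<in>K. dist x a < d + inverse (real (Suc n))" for n
  proof -
    have "(INF a\<in>K. dist x a) < d + inverse (real (Suc n))"
      using infdist_notempty[OF Kne, of x] by (simp add: d_def)
    then show ?thesis
      by (subst (asm) cINF_less_iff[OF Kne]) (auto intro: bdd_belowI[of _ 0])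
  qed
  then obtain f where f: "\<And>n. f n \<in> K" and fd: "\<And>n. dist x (f n) < d + inverse (real (Suc n))"
    by metis
  define e where "e n = inverse (real (Suc n))" for n
  have e0: "0 < e n" "e n \<le> 1" for n by (auto simp: e_def field_simps)
  have sq: "(norm (x - f n))\<^sup>2 \<le> d\<^sup>2 + (2 * d + 1) * e n" for n
  proof -
    have "norm (x - f n) \<le> d + e n" using fd[of n] by (simp add: e_def dist_norm)
    then have "(norm (x - f n))\<^sup>2 \<le> (d + e n)\<^sup>2" by (simp add: power_mono)
    also have "\<dots> = d\<^sup>2 + (2 * d) * e n + e n * e n" by (simp add: power2_eq_square algebra_simps)
    also have "e n * e n \<le> e n" using e0[of n] by (simp add: mult_le_cancel_right1)
    finally show ?thesis by (simp add: algebra_simps)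
  qed
  have dist_bound: "(norm (f m - f n))\<^sup>2 \<le> 2 * (2 * d + 1) * (e m + e n)" for m n
  proof -
    define a where "a = x - f n"
    define b where "b = x - f m"
    have mid: "(1/2::real) *\<^sub>R (f n + f m) \<in> K" using K f by (simp add: csub_add csub_scaleR)
    have "a + b = 2 *\<^sub>R (x - (1/2::real) *\<^sub>R (f n + f m))"
      by (simp add: a_def b_def algebra_simps scaleR_2)
    then have "norm (a + b) = 2 * norm (x - (1/2::real) *\<^sub>R (f n + f m))" by simp
    then have "2 * d \<le> norm (a + b)" using dle[OF mid] by simp
    then have ab: "(2 * d)\<^sup>2 \<le> (norm (a + b))\<^sup>2" by (rule power_mono) (simp add: d0)
    have "a - b = f m - f n" by (simp add: a_def b_def)
    then have "(norm (f m - f n))\<^sup>2 = 2 * (norm a)\<^sup>2 + 2 * (norm b)\<^sup>2 - (norm (a + b))\<^sup>2"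
      using parallelogram[of a b] by simp
    also have "\<dots> \<le> 2 * (d\<^sup>2 + (2 * d + 1) * e n) + 2 * (d\<^sup>2 + (2 * d + 1) * e m) - (2 * d)\<^sup>2"
      using sq[of n] sq[of m] ab unfolding a_def b_def by simp
    also have "\<dots> = 2 * (2 * d + 1) * (e m + e n)" by (simp add: power2_eq_square algebra_simps)
    finally show ?thesis .
  qed
  have "Cauchy f"
  proof (rule metric_CauchyI)
    fix eps :: real assume eps: "0 < eps"
    have "0 < eps\<^sup>2 / (4 * (2 * d + 1))" using eps d0 by simp
    then obtain N where N: "inverse (real (Suc N)) < eps\<^sup>2 / (4 * (2 * d + 1))"
      using reals_Archimedean by blast
    have "\<forall>m\<ge>N. \<forall>n\<ge>N. dist (f m) (f n) < eps"
    proof (intro allI impI)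
      fix m n assume mn: "N \<le> m" "N \<le> n"
      have em: "e m \<le> e N" "e n \<le> e N" using mn by (auto simp: e_def field_simps)
      have "(norm (f m - f n))\<^sup>2 \<le> 2 * (2 * d + 1) * (e m + e n)" by (rule dist_bound)
      also have "\<dots> \<le> 2 * (2 * d + 1) * (2 * e N)"
        using em d0 by (intro mult_left_mono) auto
      also have "\<dots> < eps\<^sup>2" using N d0 by (simp add: e_def field_simps)
      finally have "(norm (f m - f n))\<^sup>2 < eps\<^sup>2" .
      then show "dist (f m) (f n) < eps" using eps
        by (simp add: dist_norm power_less_imp_less_base)
    qed
    then show "\<exists>M. \<forall>m\<ge>M. \<forall>n\<ge>M. dist (f m) (f n) < eps" by blast
  qed
  then obtain y where y: "f \<longlonglongrightarrow> y" using Cauchy_convergent_iff convergent_def by blast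
  have yK: "y \<in> K" using closed_sequentially[OF cl f y] .
  have "dist x y \<le> d"
  proof (rule LIMSEQ_le)
    show "(\<lambda>n. dist x (f n)) \<longlonglongrightarrow> dist x y" by (intro tendsto_intros y)
    show "(\<lambda>n. d + inverse (real (Suc n))) \<longlonglongrightarrow> d"
      using tendsto_add[OF tendsto_const LIMSEQ_inverse_real_of_nat, of d] by simp
    show "\<exists>N. \<forall>n\<ge>N. dist x (f n) \<le> d + inverse (real (Suc n))"
      using fd less_imp_le by blast
  qed
  then show ?thesis using yK dle by (force simp: dist_norm)
qed

lemma proj_unique:
  fixes x :: "'a::complex_inner"
  assumes K: "csubspace K" and y: "y \<in> K" and o: "\<forall>k\<in>K. cinner (x - y) k = 0"
  shows "proj K x = y"
  unfolding proj_def
proof (rule the_equality)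
  show "y \<in> K \<and> (\<forall>k\<in>K. cinner (x - y) k = 0)" using y o by blast
  fix y' assume y': "y' \<in> K \<and> (\<forall>k\<in>K. cinner (x - y') k = 0)"
  have d: "y' - y \<in> K" using K y y' by (simp add: csub_diff)
  have "cinner (y' - y) (y' - y) = cinner (x - y) (y' - y) - cinner (x - y') (y' - y)"
    by (simp add: cinner_diff_left)
  also have "\<dots> = 0" using o y' d by simp
  finally show "y' = y" using cinner_self_eq_zero[of "y' - y"] by simp
qed

lemma proj_exists:
  fixes x :: "'a::chilbert_space"
  assumes K: "csubspace K" and cl: "closed K"
  shows "proj K x \<in> K \<and> (\<forall>k\<in>K. cinner (x - proj K x) k = 0)"
proof -
  obtain y where y: "y \<in> K" and m: "\<forall>k\<in>K. norm (x - y) \<le> norm (x - k)"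
    using min_exists[OF K cl] by blast
  have o: "\<forall>k\<in>K. cinner (x - y) k = 0" using min_imp_orth[OF K y m] by blast
  show ?thesis using proj_unique[OF K y o] y o by simp
qed




lemma pyth_gen:
  fixes a b :: "'a::complex_inner"
  assumes "cinner a b = 0"
  shows "cinner (a + b) (a + b) = cinner a a + cinner b b"
proof -
  have "cinner b a = 0" using assms cinner_commute[of b a] by simp
  then show ?thesis using assms by (simp add: cinner_add_left cinner_add_right)
qed

locale cproj =
  fixes K :: "'a::chilbert_space set"
  assumes K: "csubspace K" and cl: "closed K"
begin

lemma in_K: "proj K x \<in> K" using proj_exists[OF K cl] by blast
lemma orth: "k \<in> K \<Longrightarrow> cinner (x - proj K x) k = 0" using proj_exists[OF K cl] by blast
lemma orth': "k \<in> K \<Longrightarrow> cinner k (x - proj K x) = 0"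
  using orth cinner_commute by (metis complex_cnj_zero)
lemma fix_K: "k \<in> K \<Longrightarrow> proj K k = k" by (rule proj_unique[OF K]) auto
lemma idem: "proj K (proj K x) = proj K x" by (rule fix_K[OF in_K])
lemma padd: "proj K (x + y) = proj K x + proj K y"
proof (rule proj_unique[OF K])
  show "proj K x + proj K y \<in> K" using K in_K by (simp add: csub_add)
  show "\<forall>k\<in>K. cinner (x + y - (proj K x + proj K y)) k = 0"
  proof
    fix k assume k: "k \<in> K"
    have "x + y - (proj K x + proj K y) = (x - proj K x) + (y - proj K y)" by simp
    then have "cinner (x + y - (proj K x + proj K y)) k = cinner (x - proj K x) k + cinner (y - proj K y) k"
      by (simp only: cinner_add_left)
    then show "cinner (x + y - (proj K x + proj K y)) k = 0"
      by (simp add: orth[OF k])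
  qed
qed
lemma pscale: "proj K (c *\<^sub>C x) = c *\<^sub>C proj K x"
proof (rule proj_unique[OF K])
  show "c *\<^sub>C proj K x \<in> K" using K in_K by (simp add: csub_scale)
  show "\<forall>k\<in>K. cinner (c *\<^sub>C x - c *\<^sub>C proj K x) k = 0"
    by (simp add: orth cinner_scaleC_left flip: scaleC_diff_right)
qed
lemma plin: "clinear (proj K)" unfolding clinear_def using padd pscale by blast
lemma pdiff: "proj K (x - y) = proj K x - proj K y" by (rule clinear_diff[OF plin])
lemma pker: "proj K (x - proj K x) = 0" by (simp add: pdiff idem)
lemma psa: "cinner (proj K x) y = cinner x (proj K y)"
proof -
  have "cinner (proj K x) y = cinner (proj K x) (proj K y) + cinner (proj K x) (y - proj K y)"
    by (simp add: cinner_diff_right)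
  also have "cinner (proj K x) (y - proj K y) = 0" by (rule orth'[OF in_K])
  also have "cinner x (proj K y) = cinner (proj K x) (proj K y) + cinner (x - proj K x) (proj K y)"
    by (simp add: cinner_diff_left)
  moreover have "cinner (x - proj K x) (proj K y) = 0" by (rule orth[OF in_K])
  ultimately show ?thesis by simp
qed
lemma pyth: "(norm x)\<^sup>2 = (norm (proj K x))\<^sup>2 + (norm (x - proj K x))\<^sup>2"
proof -
  have "x = proj K x + (x - proj K x)" by simp
  then have "cinner x x = cinner (proj K x + (x - proj K x)) (proj K x + (x - proj K x))" by simp
  also have "\<dots> = cinner (proj K x) (proj K x) + cinner (x - proj K x) (x - proj K x)"
    using pyth_gen[of "proj K x" "x - proj K x"] orth'[OF in_K] by simp
  finally show ?thesis unfolding norm_sq_cinner by simp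
qed
lemma pnorm: "norm (proj K x) \<le> norm x"
  using pyth[of x] by (simp add: power2_le_imp_le)
lemma pnorm': "norm (x - proj K x) \<le> norm x"
  using pyth[of x] by (simp add: power2_le_imp_le)
lemma pbounded: "bounded_clinear (proj K)"
  unfolding bounded_clinear_def using plin pnorm by (metis mult.right_neutral)
end

lemma riesz:
  fixes f :: "'a::chilbert_space \<Rightarrow> complex"
  assumes add: "\<And>x y. f (x + y) = f x + f y" and sc: "\<And>c x. f (c *\<^sub>C x) = c * f x"
    and cont: "continuous_on UNIV f"
  shows "\<exists>w. \<forall>x. f x = cinner x w"
proof (cases "\<forall>x. f x = 0")
  case True then show ?thesis by (intro exI[of _ 0]) simp
next
  case False
  then obtain u where u: "f u \<noteq> 0" by blast
  define N where "N = {x. f x = 0}"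
  have f0: "f 0 = 0" using sc[of 0 0] by simp
  have fm: "f (- x) = - f x" for x using sc[of "-1" x] by (simp flip: minus_scaleC)
  have fd: "f (x - y) = f x - f y" for x y using add[of x "-y"] fm[of y] by simp
  have N: "csubspace N" unfolding csubspace_def N_def using f0 add sc by simp
  have cN: "closed N" unfolding N_def by (rule closed_Collect_eq[OF cont continuous_on_const])
  interpret P: cproj N using N cN by unfold_locales
  define v where "v = u - proj N u"
  have fv: "f v = f u" using P.in_K[of u] by (simp add: v_def fd N_def)
  have v0: "v \<noteq> 0" using fv u f0 by auto
  have vv: "cinner v v \<noteq> 0" using v0 cinner_self_eq_zero by auto
  define w where "w = (cnj (f v) / cnj (cinner v v)) *\<^sub>C v"
  have "f x = cinner x w" for x
  proof -
    have "x - (f x / f v) *\<^sub>C v \<in> N" using fv u by (simp add: N_def fd sc)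
    then have "cinner (x - (f x / f v) *\<^sub>C v) v = 0"
      using P.orth'[of _ u] by (simp add: v_def)
    then have "cinner x v = (f x / f v) * cinner v v"
      by (simp add: cinner_diff_left cinner_scaleC_left)
    then show ?thesis using vv fv u
      by (simp add: w_def cinner_scaleC_right)
  qed
  then show ?thesis by blast
qed

lemma adj_eq:
  assumes "\<And>x. cinner (T x) y = cinner x w"
  shows "adj T y = w"
  unfolding adj_def
proof (rule the_equality)
  show "\<forall>x. cinner (T x) y = cinner x w" using assms by blast
  fix w' assume w': "\<forall>x. cinner (T x) y = cinner x w'"
  have "cinner (w' - w) (w' - w) = 0"
    using w'[rule_format, of "w' - w"] assms[of "w' - w"]
    by (simp add: cinner_diff_right)
  then show "w' = w" using cinner_self_eq_zero[of "w' - w"] by simp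
qed

lemma adj_exists:
  fixes T :: "'a::chilbert_space \<Rightarrow> 'b::complex_inner"
  assumes T: "bounded_clinear T"
  shows "cinner (T x) y = cinner x (adj T y)"
proof -
  have l: "clinear T" using T by (simp add: bounded_clinear_def)
  have "continuous_on UNIV (\<lambda>x. cinner (T x) y)"
    by (rule continuous_on_compose2[OF continuous_cinner_left bounded_clinear_continuous[OF T]]) auto
  then obtain w where w: "\<And>x. cinner (T x) y = cinner x w"
    using riesz[of "\<lambda>x. cinner (T x) y"]
    by (auto simp: clinear_add[OF l] clinear_scale[OF l] cinner_add_left cinner_scaleC_left)
  then show ?thesis using adj_eq[of T y w] by simp
qed

lemma op_sqrt_proj:
  fixes Q :: "'a::complex_inner \<Rightarrow> 'a"
  assumes bQ: "bounded_clinear Q" and idQ: "\<And>x. Q (Q x) = Q x"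
    and saQ: "\<And>x y. cinner (Q x) y = cinner x (Q y)"
  shows "op_sqrt Q = Q"
  unfolding op_sqrt_def
proof (rule the_equality)
  have lQ: "clinear Q" using bQ by (simp add: bounded_clinear_def)
  have "cinner (Q x) x = cinner (Q x) (Q x)" for x using saQ[of "Q x" x] idQ[of x] by simp
  then have "Im (cinner (Q x) x) = 0 \<and> 0 \<le> Re (cinner (Q x) x)" for x
    by (simp add: cinner_self)
  then show "positive_op Q \<and> Q \<circ> Q = Q"
    using bQ idQ by (auto simp: positive_op_def)
  fix R assume R: "positive_op R \<and> R \<circ> R = Q"
  have lR: "clinear R" using R by (simp add: positive_op_def bounded_clinear_def)
  have pos: "Im (cinner (R x) x) = 0" "0 \<le> Re (cinner (R x) x)" for x
    using R by (auto simp: positive_op_def)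
  have RR: "R (R x) = Q x" for x using R by (metis comp_apply)
  have saR: "cinner (R x) y = cinner x (R y)" for x y
  proof -
    define a where "a = cinner (R x) y"
    define b where "b = cinner (R y) x"
    have "Im (cinner (R (x + y)) (x + y)) = 0" by (rule pos)
    then have i1: "Im (a + b) = 0"
      using pos(1)[of x] pos(1)[of y]
      by (simp add: clinear_add[OF lR] cinner_add_left cinner_add_right a_def b_def)
    have "Im (cinner (R (x + \<i> *\<^sub>C y)) (x + \<i> *\<^sub>C y)) = 0" by (rule pos)
    then have i2: "Im (- \<i> * a + \<i> * b) = 0"
      using pos(1)[of x] pos(1)[of y]
      by (simp add: clinear_add[OF lR] clinear_scale[OF lR] cinner_add_left cinner_add_right
          cinner_scaleC_left cinner_scaleC_right a_def b_def)
    have "a = cnj b" using i1 i2 by (simp add: complex_eq_iff)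
    then show ?thesis by (simp add: a_def b_def flip: cinner_commute)
  qed
  show "R = Q"
  proof
    fix x
    have k: "R (x - Q x) = 0"
    proof -
      have "Q (x - Q x) = 0" by (simp add: clinear_diff[OF lQ] idQ)
      then have "cinner (R (x - Q x)) (R (x - Q x)) = 0"
        using saR[of "x - Q x" "R (x - Q x)"] by (simp add: RR)
      then show ?thesis using cinner_self_eq_zero by blast
    qed
    have r: "R (Q x) = Q x"
    proof -
      define u where "u = R (Q x) - Q x"
      have Ru: "R u = - u" by (simp add: u_def clinear_diff[OF lR] RR idQ)
      have "0 \<le> Re (cinner (R u) u)" by (rule pos)
      then have "Re (cinner u u) \<le> 0" by (simp add: Ru cinner_minus_left)
      then have "cinner u u = 0" by (simp add: cinner_self)
      then show ?thesis using cinner_self_eq_zero[of u] by (simp add: u_def)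
    qed
    have "R x = R (Q x) + R (x - Q x)" by (simp flip: clinear_add[OF lR])
    then show "R x = Q x" using k r by simp
  qed
qed




lemma inv_on_eq:
  assumes "\<exists>!x. x \<in> A \<and> f x = b" and "x \<in> A" and "f x = b"
  shows "inv_on A f b = x"
  unfolding inv_on_def using assms by (metis (mono_tags, lifting) the1_equality)

lemma inv_on_spec:
  assumes "\<exists>!x. x \<in> A \<and> f x = b"
  shows "inv_on A f b \<in> A \<and> f (inv_on A f b) = b"
  unfolding inv_on_def using assms by (metis (mono_tags, lifting) theI')

lemma norm_scaleC: "norm (c *\<^sub>C (x::'a::complex_inner)) = cmod c * norm x"
proof -
  have cc: "c * cnj c = complex_of_real ((cmod c)\<^sup>2)" by (rule complex_norm_square[symmetric])
  have "cinner (c *\<^sub>C x) (c *\<^sub>C x) = cnj c * (c * cinner x x)"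
    by (simp only: cinner_scaleC_left cinner_scaleC_right)
  also have "\<dots> = (c * cnj c) * cinner x x" by (simp only: mult_ac)
  finally have e: "cinner (c *\<^sub>C x) (c *\<^sub>C x) = complex_of_real ((cmod c)\<^sup>2) * cinner x x"
    by (simp only: cc)
  have "(norm (c *\<^sub>C x))\<^sup>2 = (cmod c)\<^sup>2 * (norm x)\<^sup>2"
    unfolding norm_sq_cinner e by simp
  then have "(norm (c *\<^sub>C x))\<^sup>2 = (cmod c * norm x)\<^sup>2" by (simp add: power_mult_distrib)
  then show ?thesis by (simp add: power2_eq_iff_nonneg)
qed

locale ctx = cproj K for K :: "'a::chilbert_space set" +
  fixes U :: "'a \<Rightarrow> 'a" and z :: complex
  assumes uni: "unitary U" and zl: "cmod z < 1"
begin

abbreviation "V \<equiv> adj U"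
abbreviation "P \<equiv> proj K"
definition "S = (\<lambda>x. U x - P (U x))"

lemma bU: "bounded_clinear U" using uni by (simp add: unitary_def)
lemma lU: "clinear U" using bU by (simp add: bounded_clinear_def)
lemma UV: "U (V y) = y" using uni by (metis comp_apply id_apply unitary_def)
lemma VU: "V (U y) = y" using uni by (metis comp_apply id_apply unitary_def)
lemma adjU: "cinner (U x) y = cinner x (V y)" by (rule adj_exists[OF bU])
lemma adjV: "cinner (V x) y = cinner x (U y)"
  by (metis adjU cinner_commute)
lemma normU: "norm (U x) = norm x"
proof -
  have "cinner (U x) (U x) = cinner x x" by (simp add: adjU VU)
  then show ?thesis by (simp add: norm_eq_sqrt_cinner)
qed
lemma normV: "norm (V x) = norm x" by (metis UV normU)
lemma Vadd: "V (x + y) = V x + V y" by (metis UV VU clinear_add[OF lU])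
lemma Vscale: "V (c *\<^sub>C x) = c *\<^sub>C V x" by (metis UV VU clinear_scale[OF lU])
lemma lV: "clinear V" unfolding clinear_def using Vadd Vscale by blast
lemma Vdiff: "V (x - y) = V x - V y" by (rule clinear_diff[OF lV])
lemma Udiff: "U (x - y) = U x - U y" by (rule clinear_diff[OF lU])
lemma Uadd: "U (x + y) = U x + U y" by (rule clinear_add[OF lU])
lemma Uscale: "U (c *\<^sub>C x) = c *\<^sub>C U x" by (rule clinear_scale[OF lU])

lemma adjS: "adj S = (\<lambda>y. V (y - P y))"
proof
  fix y
  show "adj S y = V (y - P y)"
  proof (rule adj_eq)
    fix x
    have "cinner (S x) y = cinner (U x) y - cinner (P (U x)) y" by (simp add: S_def cinner_diff_left)
    also have "\<dots> = cinner (U x) (y - P y)" by (simp add: psa cinner_diff_right)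
    finally show "cinner (S x) y = cinner x (V (y - P y))" by (simp add: adjU)
  qed
qed

lemma adjadjS: "adj (\<lambda>y. V (y - P y)) = S"
proof
  fix y
  show "adj (\<lambda>y. V (y - P y)) y = S y"
  proof (rule adj_eq)
    fix x
    have "cinner (V (x - P x)) y = cinner x (U y) - cinner (P x) (U y)"
      by (simp add: adjV cinner_diff_left)
    also have "\<dots> = cinner x (S y)" by (simp add: psa cinner_diff_right S_def)
    finally show "cinner (V (x - P x)) y = cinner x (S y)" .
  qed
qed

lemma PS: "P (S x) = 0" by (simp add: S_def pker)

lemma defectS: "defect S = (\<lambda>x. V (P (U x)))"
proof -
  have e: "(\<lambda>x. x - adj S (S x)) = (\<lambda>x. V (P (U x)))"
  proof
    fix x
    have "adj S (S x) = V (S x - P (S x))" by (simp add: adjS)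
    also have "\<dots> = V (U x - P (U x))" by (simp add: PS) (simp add: S_def)
    also have "\<dots> = x - V (P (U x))" by (simp add: Vdiff VU)
    finally show "x - adj S (S x) = V (P (U x))" by simp
  qed
  have nb: "norm (V (P (U x))) \<le> norm x * 1" for x using pnorm[of "U x"] by (simp add: normV normU)
  have b: "bounded_clinear (\<lambda>x. V (P (U x)))"
    unfolding bounded_clinear_def clinear_def
    using nb
    by (auto simp: Vadd Uadd padd pscale Vscale Uscale intro!: exI[of _ 1])
  show ?thesis unfolding defect_def e
    by (rule op_sqrt_proj[OF b]) (simp_all add: UV idem adjV psa adjU)
qed

lemma defect_adjS: "defect (adj S) = P"
proof -
  have e: "(\<lambda>x. x - adj (adj S) (adj S x)) = P"
  proof
    fix x
    have "adj (adj S) (adj S x) = x - P x"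
      unfolding adjS adjadjS by (simp add: S_def UV pker)
    then show "x - adj (adj S) (adj S x) = P x" by simp
  qed
  show ?thesis unfolding defect_def e
    by (rule op_sqrt_proj[OF pbounded]) (simp_all add: idem psa)
qed

lemma invA: "\<exists>!y. y \<in> UNIV \<and> U y - z *\<^sub>C y = b"
proof -
  define g where "g y = V (b + z *\<^sub>C y)" for y
  have "\<exists>!y. g y = y"
  proof (rule banach_fix_type[of "cmod z"])
    show "0 \<le> cmod z" "cmod z < 1" using zl by auto
    show "\<forall>x y. dist (g x) (g y) \<le> cmod z * dist x y"
    proof (intro allI)
      fix x y
      have "(b + z *\<^sub>C x) - (b + z *\<^sub>C y) = z *\<^sub>C (x - y)" by (simp add: scaleC_diff_right)
      then have "g x - g y = V (z *\<^sub>C (x - y))" unfolding g_def by (metis Vdiff)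
      then show "dist (g x) (g y) \<le> cmod z * dist x y"
        by (simp add: dist_norm normV norm_scaleC)
    qed
  qed
  moreover have "g y = y \<longleftrightarrow> U y - z *\<^sub>C y = b" for y
    by (metis UV VU add_diff_cancel eq_diff_eq g_def)
  ultimately show ?thesis by simp
qed

end



lemma ex1_same: "\<exists>!x. x \<in> A \<and> f x = b \<Longrightarrow> y1 \<in> A \<Longrightarrow> f y1 = b \<Longrightarrow> y2 \<in> A \<Longrightarrow> f y2 = b \<Longrightarrow> y1 = y2"
  by (erule ex1E) metis

context ctx begin

definition "h y = y - z *\<^sub>C V (y - P y)"

lemma invB: "\<exists>!y. y \<in> UNIV \<and> h y = b"
proof -
  define g where "g y = b + z *\<^sub>C V (y - P y)" for y
  have "\<exists>!y. g y = y"
  proof (rule banach_fix_type[of "cmod z"])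
    show "0 \<le> cmod z" "cmod z < 1" using zl by auto
    show "\<forall>x y. dist (g x) (g y) \<le> cmod z * dist x y"
    proof (intro allI)
      fix x y
      have "g x - g y = z *\<^sub>C (V (x - P x) - V (y - P y))" by (simp add: g_def scaleC_diff_right)
      also have "V (x - P x) - V (y - P y) = V ((x - y) - P (x - y))" by (simp only: Vdiff pdiff) (simp add: algebra_simps)
      finally have "g x - g y = z *\<^sub>C V ((x - y) - P (x - y))" .
      then have "dist (g x) (g y) = cmod z * norm ((x - y) - P (x - y))"
        by (simp add: dist_norm norm_scaleC normV)
      also have "\<dots> \<le> cmod z * norm (x - y)" by (rule mult_left_mono[OF pnorm']) simp
      finally show "dist (g x) (g y) \<le> cmod z * dist x y" by (simp add: dist_norm)
    qed
  qed
  moreover have "g y = y \<longleftrightarrow> h y = b" for y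
    unfolding g_def h_def diff_eq_eq by auto
  ultimately show ?thesis by simp
qed

lemma char_S: "char_fun S z x = - S x + z *\<^sub>C P (inv_on UNIV h (V (P (U x))))"
  unfolding char_fun_def defect_adjS defectS unfolding adjS h_def[abs_def] by simp

lemma main:
  assumes k: "k \<in> K"
  shows "cinner (U (inv_on UNIV (\<lambda>x. U x - z *\<^sub>C x) k) + z *\<^sub>C inv_on UNIV (\<lambda>x. U x - z *\<^sub>C x) k) k
       = cinner ((\<lambda>x. U x + char_fun S z x) (inv_on (V ` K) (\<lambda>x. U x - char_fun S z x) k)) k"
proof -
  define w where "w = inv_on UNIV (\<lambda>x. U x - z *\<^sub>C x) k"
  have w: "U w - z *\<^sub>C w = k" using inv_on_spec[OF invA] by (simp add: w_def)
  have w': "U w = k + z *\<^sub>C w" using w by (simp add: diff_eq_eq)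
  have wu: "y = w" if "U y - z *\<^sub>C y = k" for y
    using ex1_same[OF invA[of k], of y w] w that by simp
  define x0 where "x0 = V (k + z *\<^sub>C P w)"
  have Ux0: "U x0 = k + z *\<^sub>C P w" by (simp add: x0_def UV)
  have Ux0K: "U x0 \<in> K" unfolding Ux0 using K k in_K by (simp add: csub_add csub_scale)
  have hw: "h w = x0"
  proof -
    have "U (h w) = U w - z *\<^sub>C (w - P w)" by (simp add: h_def Udiff Uscale UV)
    also have "\<dots> = k + z *\<^sub>C P w" by (simp add: w' scaleC_diff_right algebra_simps)
    finally show ?thesis by (metis VU x0_def)
  qed
  have hinv: "inv_on UNIV h x = y" if "h y = x" for x y
    by (rule inv_on_eq[OF invB _ that]) simp
  have SK: "S x = 0" if "U x \<in> K" for x using that by (simp add: S_def fix_K)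
  have dK: "V (P (U x)) = x" if "U x \<in> K" for x using that by (simp add: fix_K VU)
  have th0: "char_fun S z x0 = z *\<^sub>C P w"
    by (simp add: char_S SK[OF Ux0K] dK[OF Ux0K] hinv[OF hw])
  have x0sol: "U x0 - char_fun S z x0 = k" by (simp add: th0 Ux0)
  have x0in: "x0 \<in> V ` K" by (rule image_eqI[where f=V and x="U x0", OF VU[of x0, symmetric] Ux0K])
  have uniq: "x = x0" if xin: "x \<in> V ` K" and xs: "U x - char_fun S z x = k" for x
  proof -
    have UxK: "U x \<in> K" using xin UV by auto
    define y where "y = inv_on UNIV h x"
    have hy: "h y = x" using inv_on_spec[OF invB] by (simp add: y_def)
    have thx: "char_fun S z x = z *\<^sub>C P y"
      by (simp add: char_S SK[OF UxK] dK[OF UxK] y_def)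
    have "U (h y) = U y - z *\<^sub>C (y - P y)" by (simp add: h_def Udiff Uscale UV)
    then have "U x = U y - z *\<^sub>C y + z *\<^sub>C P y" by (simp add: hy scaleC_diff_right)
    then have "U y - z *\<^sub>C y = U x - z *\<^sub>C P y" by simp
    then have "U y - z *\<^sub>C y = k" using xs thx by simp
    then have "y = w" by (rule wu)
    then show ?thesis using hy hw by simp
  qed
  have ex: "\<exists>!x. x \<in> V ` K \<and> U x - char_fun S z x = k"
    by (rule ex1I[of _ x0]) (use x0in x0sol in blast, use uniq in blast)
  have inv0: "inv_on (V ` K) (\<lambda>x. U x - char_fun S z x) k = x0"
    by (rule inv_on_eq[OF ex x0in x0sol])
  have Pk: "cinner (P w) k = cinner w k" by (simp add: psa fix_K[OF k])
  have l: "U w + z *\<^sub>C w = k + z *\<^sub>C w + z *\<^sub>C w" by (simp add: w')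
  have r: "U x0 + char_fun S z x0 = k + z *\<^sub>C P w + z *\<^sub>C P w" by (simp add: th0 Ux0)
  show ?thesis unfolding w_def[symmetric] inv0
    by (simp only: l r cinner_add_left cinner_scaleC_left Pk)
qed

end

theorem theorem3p1:
  fixes U :: "'a::chilbert_space \<Rightarrow> 'a" and K :: "'a set" and z :: complex and k :: 'a
  assumes "unitary U"
    and "csubspace K" and "closed K"
    and "cmod z < 1"
    and "k \<in> K"
  shows "let S = (\<lambda>x. U x - proj K (U x));
             Theta = char_fun S z;
             DS = adj U ` K
         in cinner (U (inv_on UNIV (\<lambda>x. U x - z *\<^sub>C x) k) + z *\<^sub>C inv_on UNIV (\<lambda>x. U x - z *\<^sub>C x) k) k
            = cinner ((\<lambda>x. U x + Theta x) (inv_on DS (\<lambda>x. U x - Theta x) k)) k"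
proof -
  interpret ctx K U z using assms by (simp add: ctx_def ctx_axioms_def cproj_def)
  show ?thesis unfolding Let_def using main[OF assms(5)] by (simp add: S_def)
qed

end
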